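(* Let $\Phi_1,\Phi_2$ be two convex growth functions. Assume that $\Phi_2\in \mathscr{U}^q$ and that $\frac{\Phi_2}{\Phi_1}$ is nondecreasing. Then the function $\Phi_3$ defined by $\Phi_3(0)=0$ and $\Phi_3(t)=\dfrac{1}{\Phi_2\circ\Phi_1^{-1}\left(\frac 1t\right)}$ for $t>0$ belongs to the class $\mathscr{U}$.
   Context: A growth function is a continuous nondecreasing function from $[0,\infty)$ onto $[0,\infty)$; $\Phi^{-1}$ is its inverse. $\Phi$ is of upper type $q$ if there is $C>0$ with $\Phi(st)\le Ct^q\Phi(s)$ for all $s>0$, $t\ge1$. $\mathscr{U}^q$ ($q\ge1$) is the set of growth functions of upper type $q$ with $t\mapsto\Phi(t)/t$ nondecreasing, and $\mathscr{U}=\bigcup_{q\ge1}\mathscr{U}^q$. *)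

theory Defs
  imports "HOL-Analysis.Analysis"
begin

text \<open>Growth function: continuous nondecreasing function from [0,\<infinity>) onto [0,\<infinity>).
  Functions are modelled as real \<Rightarrow> real; values at negative arguments are irrelevant.\<close>
definition growth_function :: "(real \<Rightarrow> real) \<Rightarrow> bool" where
  "growth_function \<Phi> \<longleftrightarrow>
     continuous_on {0..} \<Phi> \<and> mono_on {0..} \<Phi> \<and> \<Phi> ` {0..} = {0..}"

text \<open>Inverse of a growth function (on [0,\<infinity>)).  For a convex growth function it is
  uniquely determined at every positive argument.\<close>
definition gf_inv :: "(real \<Rightarrow> real) \<Rightarrow> real \<Rightarrow> real" where
  "gf_inv \<Phi> = inv_into {0..} \<Phi>"

definition upper_type :: "real \<Rightarrow> (real \<Rightarrow> real) \<Rightarrow> bool" where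
  "upper_type q \<Phi> \<longleftrightarrow>
     (\<exists>C>0. \<forall>s>0. \<forall>t\<ge>1. \<Phi> (s * t) \<le> C * t powr q * \<Phi> s)"

definition class_U_q :: "real \<Rightarrow> (real \<Rightarrow> real) set" where
  "class_U_q q = {\<Phi>. growth_function \<Phi> \<and> upper_type q \<Phi> \<and>
                     mono_on {0<..} (\<lambda>t. \<Phi> t / t)}"

definition class_U :: "(real \<Rightarrow> real) set" where
  "class_U = (\<Union>q\<in>{1..}. class_U_q q)"

end

theory Submission
  imports Defs
begin

lemma gf_nonneg:
  assumes "growth_function f" "x \<ge> 0" shows "f x \<ge> 0"
  using assms unfolding growth_function_def by blast

lemma gf_mono:
  assumes "growth_function f" "0 \<le> x" "x \<le> y" shows "f x \<le> f y"
  using assms unfolding growth_function_def by (auto intro: mono_onD)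

lemma gf_surj:
  assumes "growth_function f" "y \<ge> 0" obtains x where "x \<ge> 0" "f x = y"
  using assms unfolding growth_function_def by (metis atLeast_iff imageE)

lemma gf_zero:
  assumes "growth_function f" shows "f 0 = 0"
proof -
  obtain x where x: "x \<ge> 0" "f x = 0" using gf_surj[OF assms, of 0] by auto
  have "f 0 \<le> f x" using gf_mono[OF assms, of 0 x] x by auto
  then show ?thesis using x gf_nonneg[OF assms, of 0] by auto
qed

lemma convex_ratio:
  assumes "growth_function f" "convex_on {0..} f" "0 \<le> x" "x \<le> y" "0 < y"
  shows "f x \<le> x / y * f y"
proof -
  have "f ((1 - x/y) *\<^sub>R 0 + (x/y) *\<^sub>R y) \<le> (1 - x/y) * f 0 + (x/y) * f y"
    using assms by (intro convex_onD[OF assms(2)]) auto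
  then show ?thesis using assms gf_zero[OF assms(1)] by simp
qed

theorem lemma3p2:
  fixes \<Phi>1 \<Phi>2 :: "real \<Rightarrow> real" and q :: real
  assumes "growth_function \<Phi>1" and "convex_on {0..} \<Phi>1"
    and "growth_function \<Phi>2" and "convex_on {0..} \<Phi>2"
    and "q \<ge> 1" and "\<Phi>2 \<in> class_U_q q"
    and "mono_on {0<..} (\<lambda>t. \<Phi>2 t / \<Phi>1 t)"
  shows "(\<lambda>t. if t \<le> 0 then 0 else 1 / \<Phi>2 (gf_inv \<Phi>1 (1 / t))) \<in> class_U"
proof -
  note G1 = assms(1) and G2 = assms(3)
  from assms(6) obtain C where C: "C > 0" "\<And>s t. s > 0 \<Longrightarrow> t \<ge> 1 \<Longrightarrow> \<Phi>2 (s * t) \<le> C * t powr q * \<Phi>2 s"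
    unfolding class_U_q_def upper_type_def by blast
  have P2pos: "\<Phi>2 s > 0" if "s > 0" for s
  proof (rule ccontr)
    assume "\<not> \<Phi>2 s > 0"
    then have z: "\<Phi>2 s = 0" using gf_nonneg[OF G2, of s] that by auto
    obtain x where x: "x \<ge> 0" "\<Phi>2 x = 1" using gf_surj[OF G2, of 1] by auto
    have "x > s"
    proof (rule ccontr)
      assume "\<not> x > s" then have "\<Phi>2 x \<le> \<Phi>2 s" using gf_mono[OF G2, of x s] x by auto
      then show False using x z by auto
    qed
    have "\<Phi>2 (s * (x/s)) \<le> C * (x/s) powr q * \<Phi>2 s" using C(2)[of s "x/s"] that \<open>x > s\<close> by auto
    then show False using z x that by auto
  qed
  have P1pos: "\<Phi>1 s > 0" if "s > 0" for s
  proof (rule ccontr)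
    assume "\<not> \<Phi>1 s > 0"
    then have z: "\<Phi>1 s = 0" using gf_nonneg[OF G1, of s] that by auto
    obtain t2 where t2: "t2 \<ge> 0" "\<Phi>1 t2 = 1" using gf_surj[OF G1, of 1] by auto
    have "t2 > s"
    proof (rule ccontr)
      assume "\<not> t2 > s" then have "\<Phi>1 t2 \<le> \<Phi>1 s" using gf_mono[OF G1, of t2 s] t2 by auto
      then show False using t2 z by auto
    qed
    define R where "R = \<Phi>2 t2"
    have R: "R > 0" unfolding R_def using P2pos \<open>t2 > s\<close> that by auto
    define m where "m = \<Phi>2 s"
    have m: "m > 0" unfolding m_def using P2pos that by auto
    define e where "e = min (1/2) (m / (2*R))"
    have e: "e > 0" "e \<le> 1/2" "e \<le> m / (2*R)" using R m unfolding e_def by auto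
    obtain x where x: "x \<ge> 0" "\<Phi>1 x = e" using gf_surj[OF G1, of e] e by auto
    have "x > s"
    proof (rule ccontr)
      assume "\<not> x > s" then have "\<Phi>1 x \<le> \<Phi>1 s" using gf_mono[OF G1, of x s] x by auto
      then show False using x z e by auto
    qed
    have "x < t2"
    proof (rule ccontr)
      assume "\<not> x < t2" then have "\<Phi>1 t2 \<le> \<Phi>1 x" using gf_mono[OF G1, of t2 x] t2 by auto
      then show False using x t2 e by auto
    qed
    have "\<Phi>2 x / \<Phi>1 x \<le> \<Phi>2 t2 / \<Phi>1 t2"
      using mono_onD[OF assms(7), of x t2] \<open>x > s\<close> \<open>x < t2\<close> that by auto
    then have "\<Phi>2 x / e \<le> R" using x t2 R_def by simp
    moreover have "\<Phi>2 x \<ge> m" unfolding m_def using gf_mono[OF G2, of s x] \<open>x > s\<close> that by auto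
    ultimately have "m / e \<le> R" using e by (meson divide_right_mono less_imp_le order_trans)
    then have "m \<le> R * e" using e by (simp add: divide_le_eq)
    also have "\<dots> \<le> R * (m / (2*R))" using e R by (intro mult_left_mono) auto
    finally show False using R m by simp
  qed
  have P1smono: "\<Phi>1 x < \<Phi>1 y" if "0 \<le> x" "x < y" for x y
  proof (cases "x = 0")
    case True then show ?thesis using gf_zero[OF G1] P1pos that by auto
  next
    case False
    have "\<Phi>1 x \<le> x / y * \<Phi>1 y" using convex_ratio[OF G1 assms(2), of x y] that by auto
    also have "\<dots> < \<Phi>1 y" using P1pos[of y] that False by (simp add: divide_less_eq)
    finally show ?thesis .
  qed
  have inj1: "inj_on \<Phi>1 {0..}"
    by (rule inj_onI) (metis P1smono atLeast_iff linorder_neqE_linordered_idom order_less_irrefl)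
  define g where "g = gf_inv \<Phi>1"
  have img1: "\<Phi>1 ` {0..} = {0..}" using G1 unfolding growth_function_def by auto
  have g1: "g y \<ge> 0" "\<Phi>1 (g y) = y" if "y \<ge> 0" for y
    using that img1 unfolding g_def gf_inv_def
    by (metis atLeast_iff image_eqI inv_into_into f_inv_into_f)+
  have g2: "g (\<Phi>1 x) = x" if "x \<ge> 0" for x
    using inv_into_f_f[OF inj1] that unfolding g_def gf_inv_def by auto
  have gpos: "g y > 0" if "y > 0" for y
    using g1[of y] that gf_zero[OF G1] by (metis less_eq_real_def less_irrefl)
  have gmono: "g y \<le> g x" if "0 \<le> y" "y \<le> x" for x y
    using g1[of x] g1[of y] that P1smono[of "g x" "g y"] by force
  define F where "F = (\<lambda>t::real. if t \<le> 0 then 0 else 1 / \<Phi>2 (g (1 / t)))"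
  have Fpos: "F t > 0" if "t > 0" for t
    using P2pos gpos that unfolding F_def by auto
  have Fmono: "F s \<le> F t" if "0 \<le> s" "s \<le> t" for s t
  proof (cases "s = 0")
    case True then show ?thesis using Fpos[of t] that unfolding F_def by auto
  next
    case False
    then have "g (1/t) \<le> g (1/s)" using that by (intro gmono) (auto simp: frac_le)
    then have "\<Phi>2 (g (1/t)) \<le> \<Phi>2 (g (1/s))" using gf_mono[OF G2, of "g (1/t)" "g (1/s)"] gpos[of "1/t"] that False by auto
    then show ?thesis using False that P2pos gpos unfolding F_def
      by (auto intro!: divide_left_mono)
  qed
  have Fimg: "F ` {0..} = {0..}"
  proof
    show "F ` {0..} \<subseteq> {0..}" using Fpos unfolding F_def by (auto simp: less_eq_real_def)
  next
    show "{0..} \<subseteq> F ` {0..}"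
    proof
      fix y :: real assume "y \<in> {0..}"
      show "y \<in> F ` {0..}"
      proof (cases "y = 0")
        case True then show ?thesis unfolding F_def by (auto intro!: image_eqI[of _ _ 0])
      next
        case False
        then have y: "y > 0" using \<open>y \<in> {0..}\<close> by auto
        obtain x where x: "x \<ge> 0" "\<Phi>2 x = 1/y" using gf_surj[OF G2, of "1/y"] y by auto
        have "x > 0" using x y gf_zero[OF G2] by (metis less_eq_real_def zero_less_divide_1_iff less_irrefl)
        define t where "t = 1 / \<Phi>1 x"
        have t: "t > 0" unfolding t_def using P1pos \<open>x > 0\<close> by auto
        have "g (1/t) = x" unfolding t_def using g2 x by simp
        then have "F t = y" unfolding F_def using t x by simp
        then show ?thesis using t by (auto intro!: image_eqI[of _ _ t])
      qed
    qed
  qed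
  have gcont: "isCont g y" if "y > 0" for y
  proof -
    define z where "z = g y"
    have z: "z > 0" unfolding z_def using gpos that by auto
    have "isCont g (\<Phi>1 z)"
    proof (rule isCont_inverse_function[where d="z/2" and x=z and f=\<Phi>1 and g=g])
      show "0 < z/2" using z by auto
    next
      fix w assume "\<bar>w - z\<bar> \<le> z/2"
      then have w: "w > 0" using z by (auto simp: abs_if split: if_splits)
      show "g (\<Phi>1 w) = w" using g2 w by auto
    next
      fix w assume "\<bar>w - z\<bar> \<le> z/2"
      then have w: "w > 0" using z by (auto simp: abs_if split: if_splits)
      have "continuous_on {0<..} \<Phi>1"
        using G1 unfolding growth_function_def by (auto elim: continuous_on_subset)
      then show "isCont \<Phi>1 w" using w continuous_on_eq_continuous_at[of "{0<..}" \<Phi>1] by auto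
    qed
    then show ?thesis using g1 that unfolding z_def by auto
  qed
  have P2cont: "isCont \<Phi>2 w" if "w > 0" for w
  proof -
    have "continuous_on {0<..} \<Phi>2"
      using G2 unfolding growth_function_def by (auto elim: continuous_on_subset)
    then show ?thesis using that continuous_on_eq_continuous_at[of "{0<..}" \<Phi>2] by auto
  qed
  define H where "H = (\<lambda>t::real. 1 / \<Phi>2 (g (1 / t)))"
  have Hcont: "isCont H t" if "t > 0" for t
  proof -
    have "isCont (\<lambda>t. 1/t) t" using that by (auto intro!: continuous_intros)
    moreover have "isCont g (1/t)" using gcont that by auto
    ultimately have "isCont (\<lambda>t. g (1/t)) t" by (rule isCont_o2)
    moreover have "isCont \<Phi>2 (g (1/t))" using P2cont gpos that by auto
    ultimately have "isCont (\<lambda>t. \<Phi>2 (g (1/t))) t" by (rule isCont_o2)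
    moreover have "\<Phi>2 (g (1/t)) \<noteq> 0" using P2pos[of "g (1/t)"] gpos[of "1/t"] that by auto
    ultimately show ?thesis unfolding H_def
      by (auto intro!: continuous_intros)
  qed
  have "continuous_on {0<..} H" using Hcont continuous_on_eq_continuous_at[of "{0<..}" H] by auto
  then have "continuous_on {0<..} F" by (rule continuous_on_cong[THEN iffD1, rotated 2]) (auto simp: F_def H_def)
  then have Fcont: "isCont F t" if "t > 0" for t
    using that continuous_on_eq_continuous_at[of "{0<..}" F] by auto
  have F0: "(F \<longlongrightarrow> 0) (at 0 within {0..})"
  proof (rule tendstoI)
    fix e :: real assume e: "e > 0"
    obtain x where x: "x \<ge> 0" "\<Phi>2 x = 2/e" using gf_surj[OF G2, of "2/e"] e by auto
    have "x > 0" using x e gf_zero[OF G2] by (metis less_eq_real_def zero_less_divide_iff zero_less_numeral less_irrefl)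
    define t0 where "t0 = 1 / \<Phi>1 x"
    have t0: "t0 > 0" unfolding t0_def using P1pos \<open>x > 0\<close> by auto
    have "g (1/t0) = x" unfolding t0_def using g2 x by simp
    then have Ft0: "F t0 = e/2" unfolding F_def using t0 x by simp
    show "\<forall>\<^sub>F t in at 0 within {0..}. dist (F t) 0 < e"
      unfolding eventually_at
    proof (intro exI[of _ t0] conjI ballI impI)
      show "t0 > 0" by fact
      fix t :: real assume "t \<in> {0..}" "t \<noteq> 0 \<and> dist t 0 < t0"
      then have "0 < t" "t \<le> t0" by auto
      then have "F t \<le> e/2" "F t > 0" using Fmono[of t t0] Fpos by (auto simp: Ft0)
      then show "dist (F t) 0 < e" using e by simp
    qed
  qed
  have "continuous_on {0..} F"
    unfolding continuous_on_eq_continuous_within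
  proof
    fix t :: real assume "t \<in> {0..}"
    show "continuous (at t within {0..}) F"
    proof (cases "t = 0")
      case True then show ?thesis using F0 unfolding continuous_within by (simp add: F_def)
    next
      case False then show ?thesis using Fcont[of t] \<open>t \<in> {0..}\<close>
        by (auto intro: continuous_at_imp_continuous_at_within)
    qed
  qed
  then have gfF: "growth_function F" unfolding growth_function_def using Fimg Fmono
    by (auto intro: mono_onI)
  have Fratio: "mono_on {0<..} (\<lambda>t. F t / t)"
  proof (rule mono_onI)
    fix a b :: real assume ab: "a \<in> {0<..}" "b \<in> {0<..}" "a \<le> b"
    define sa where "sa = g (1/a)"
    define sb where "sb = g (1/b)"
    have pos: "sa > 0" "sb > 0" using gpos ab unfolding sa_def sb_def by auto
    have Pa: "\<Phi>1 sa = 1/a" "\<Phi>1 sb = 1/b" using g1 ab unfolding sa_def sb_def by auto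
    have "sb \<le> sa" unfolding sa_def sb_def using ab by (intro gmono) (auto simp: frac_le)
    then have "\<Phi>2 sb / \<Phi>1 sb \<le> \<Phi>2 sa / \<Phi>1 sa" using mono_onD[OF assms(7), of sb sa] pos by auto
    then have "\<Phi>1 sa / \<Phi>2 sa \<le> \<Phi>1 sb / \<Phi>2 sb"
      using P1pos P2pos pos by (simp add: divide_simps mult.commute)
    moreover have "F a / a = \<Phi>1 sa / \<Phi>2 sa" "F b / b = \<Phi>1 sb / \<Phi>2 sb"
      using ab Pa unfolding F_def sa_def[symmetric] sb_def[symmetric] by auto
    ultimately show "F a / a \<le> F b / b" by simp
  qed
  have Fup: "upper_type q F"
    unfolding upper_type_def
  proof (intro exI[of _ C] conjI allI impI)
    show "C > 0" by fact
    fix s t :: real assume st: "s > 0" "t \<ge> 1"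
    define u where "u = g (1/s)"
    define v where "v = g (1/(s*t))"
    have pos: "u > 0" "v > 0" using gpos st unfolding u_def v_def by auto
    have Pu: "\<Phi>1 u = 1/s" "\<Phi>1 v = 1/(s*t)" using g1 st unfolding u_def v_def by auto
    have "v \<le> u" unfolding u_def v_def using st
      by (intro gmono) (auto simp: divide_simps)
    then have "\<Phi>1 v \<le> v / u * \<Phi>1 u" using convex_ratio[OF G1 assms(2), of v u] pos by auto
    then have "1/(s*t) \<le> v / (u * s)" using Pu by simp
    then have "u \<le> v * t" using st pos by (simp add: divide_simps mult.commute mult.left_commute)
    then have "\<Phi>2 u \<le> \<Phi>2 (v * t)" using gf_mono[OF G2] pos by auto
    also have "\<dots> \<le> C * t powr q * \<Phi>2 v" using C(2)[of v t] pos st by auto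
    finally have "\<Phi>2 u \<le> C * t powr q * \<Phi>2 v" .
    then have "1 / \<Phi>2 v \<le> C * t powr q * (1 / \<Phi>2 u)"
      using P2pos pos by (simp add: divide_simps mult.commute)
    moreover have "\<not> s * t \<le> 0" using st by (simp add: not_le)
    ultimately show "F (s * t) \<le> C * t powr q * F s"
      using st mult_pos_pos[of s t] \<open>0 < s\<close> unfolding F_def u_def[symmetric] v_def[symmetric] by auto
  qed
  have "F \<in> class_U" unfolding class_U_def class_U_q_def using gfF Fratio Fup assms(5) by auto
  then show ?thesis unfolding F_def g_def .
qed

end
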